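(* Let $N$ be a phylogenetic network on $X\subseteq[n]$ and let $i,j\in[n]$ be distinct. Then $(i,j)$ is reducible in $N$ (i.e. is a cherry or a reticulated-cherry of $N$) if and only if $(i,j)$ is reducible in $\boldsymbol\mu(N)$ (i.e. is a cherry or a reticulated-cherry of the multiset $\boldsymbol\mu(N)$).
   Context: A (binary) phylogenetic network on a finite set $X\subseteq[n]=\{1,\dots,n\}$ is a directed acyclic graph $N=(V,A)$ without parallel arcs in which every node is exactly one of: the root (indegree 0, outdegree 1; there is exactly one), a leaf (indegree 1, outdegree 0), a tree node (indegree 1, outdegree 2), or a reticulation (indegree 2, outdegree 1); the leaves are identified with the elements of $X$. $V_T(N)$ denotes the set of leaves and tree nodes, $V_H(N)$ the set of reticulations. $m(u,v)$ is the number of directed paths from $u$ to $v$ (trivial paths allowed). Extended $\mu$-vectors: $\mu_i(u)=m(u,i)$ for $i\in[n]$ (0 if $i\notin X$), $\mu_0(u)=\sum_{h\in V_H(N)} m(u,h)$, $\mu(u)=(\mu_0(u),\dots,\mu_n(u))$; $\boldsymbol\mu(N)$ is the multiset $\{\mu(u)\mid u\in V_T(N)\}$. $\delta_S$ is the 0/1 indicator vector of $S\subseteq\{0,\dots,n\}$ and $\delta_{j_1,\dots,j_k}=\delta_{\{j_1,\dots,j_k\}}$. For distinct leaves $i,j$ of $N$ with parents $p_i,p_j$, $(i,j)$ is a cherry of $N$ if $p_i=p_j$, and a reticulated-cherry of $N$ if $p_i$ is a reticulation, $p_j$ is a tree node and $p_j$ is a parent of $p_i$. For a finite multiset $\boldsymbol\mu$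 of vectors of nonnegative integers indexed by $0,\dots,n$ and distinct $i,j\in[n]$, $(i,j)$ is a cherry of $\boldsymbol\mu$ if $\delta_{i,j}$ belongs to $\boldsymbol\mu$ with multiplicity exactly 1 and every element $\mu$ of $\boldsymbol\mu$ other than $\delta_i,\delta_j$ satisfies $\mu_i=\mu_j$; $(i,j)$ is a reticulated-cherry of $\boldsymbol\mu$ if $\delta_{0,i,j}$ belongs to $\boldsymbol\mu$ with multiplicity exactly 1 and every element $\mu$ of $\boldsymbol\mu$ other than $\delta_i,\delta_j$ satisfies $\mu_0\ge\mu_i\ge\mu_j$. *)

theory Defs
  imports Main "HOL-Library.Multiset"
begin

text \<open>A network is given by a node set V, an arc set A (a set of pairs, so no
parallel arcs), and a labelling lab of the leaves by the elements of X.\<close>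

definition indeg :: "('v \<times> 'v) set \<Rightarrow> 'v \<Rightarrow> nat" where
  "indeg A v = card {u. (u, v) \<in> A}"

definition outdeg :: "('v \<times> 'v) set \<Rightarrow> 'v \<Rightarrow> nat" where
  "outdeg A v = card {w. (v, w) \<in> A}"

definition is_root :: "('v \<times> 'v) set \<Rightarrow> 'v \<Rightarrow> bool" where
  "is_root A v \<longleftrightarrow> indeg A v = 0 \<and> outdeg A v = 1"

definition is_leaf :: "('v \<times> 'v) set \<Rightarrow> 'v \<Rightarrow> bool" where
  "is_leaf A v \<longleftrightarrow> indeg A v = 1 \<and> outdeg A v = 0"

definition is_tree_node :: "('v \<times> 'v) set \<Rightarrow> 'v \<Rightarrow> bool" where
  "is_tree_node A v \<longleftrightarrow> indeg A v = 1 \<and> outdeg A v = 2"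

definition is_ret :: "('v \<times> 'v) set \<Rightarrow> 'v \<Rightarrow> bool" where
  "is_ret A v \<longleftrightarrow> indeg A v = 2 \<and> outdeg A v = 1"

definition leaves :: "'v set \<Rightarrow> ('v \<times> 'v) set \<Rightarrow> 'v set" where
  "leaves V A = {v \<in> V. is_leaf A v}"

definition VT :: "'v set \<Rightarrow> ('v \<times> 'v) set \<Rightarrow> 'v set" where
  "VT V A = {v \<in> V. is_leaf A v \<or> is_tree_node A v}"

definition VH :: "'v set \<Rightarrow> ('v \<times> 'v) set \<Rightarrow> 'v set" where
  "VH V A = {v \<in> V. is_ret A v}"

definition phylo_network ::
  "nat \<Rightarrow> nat set \<Rightarrow> 'v set \<Rightarrow> ('v \<times> 'v) set \<Rightarrow> ('v \<Rightarrow> nat) \<Rightarrow> bool" where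
  "phylo_network n X V A lab \<longleftrightarrow>
     finite V \<and> A \<subseteq> V \<times> V \<and> (\<forall>v. (v, v) \<notin> A\<^sup>+) \<and>
     card {v \<in> V. is_root A v} = 1 \<and>
     (\<forall>v \<in> V. is_root A v \<or> is_leaf A v \<or> is_tree_node A v \<or> is_ret A v) \<and>
     X \<subseteq> {1..n} \<and> bij_betw lab (leaves V A) X"

text \<open>Directed paths from u to v, as nonempty node lists (trivial path [u] allowed).\<close>
definition paths :: "('v \<times> 'v) set \<Rightarrow> 'v \<Rightarrow> 'v \<Rightarrow> 'v list set" where
  "paths A u v = {p. p \<noteq> [] \<and> hd p = u \<and> last p = v \<and>
                     (\<forall>k. Suc k < length p \<longrightarrow> (p ! k, p ! Suc k) \<in> A)}"

definition npaths :: "('v \<times> 'v) set \<Rightarrow> 'v \<Rightarrow> 'v \<Rightarrow> nat" where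
  "npaths A u v = card (paths A u v)"

text \<open>Extended mu-vector, as a function on indices 0..n (0 beyond n).
 mu_i(u) = m(u, leaf labelled i) (0 if i \<notin> X); mu_0(u) = sum over reticulations.\<close>
definition muvec ::
  "nat \<Rightarrow> 'v set \<Rightarrow> ('v \<times> 'v) set \<Rightarrow> ('v \<Rightarrow> nat) \<Rightarrow> 'v \<Rightarrow> nat \<Rightarrow> nat" where
  "muvec n V A lab u k =
     (if k = 0 then (\<Sum>h \<in> VH V A. npaths A u h)
      else if k \<le> n then (\<Sum>l \<in> {l \<in> leaves V A. lab l = k}. npaths A u l)
      else 0)"

definition mu_multiset ::
  "nat \<Rightarrow> 'v set \<Rightarrow> ('v \<times> 'v) set \<Rightarrow> ('v \<Rightarrow> nat) \<Rightarrow> (nat \<Rightarrow> nat) multiset" where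
  "mu_multiset n V A lab = image_mset (muvec n V A lab) (mset_set (VT V A))"

definition delta :: "nat set \<Rightarrow> nat \<Rightarrow> nat" where
  "delta S = (\<lambda>k. if k \<in> S then 1 else 0)"

definition net_cherry ::
  "'v set \<Rightarrow> ('v \<times> 'v) set \<Rightarrow> ('v \<Rightarrow> nat) \<Rightarrow> nat \<Rightarrow> nat \<Rightarrow> bool" where
  "net_cherry V A lab i j \<longleftrightarrow> i \<noteq> j \<and>
     (\<exists>li lj p. li \<in> leaves V A \<and> lj \<in> leaves V A \<and> lab li = i \<and> lab lj = j \<and>
        (p, li) \<in> A \<and> (p, lj) \<in> A)"

definition net_ret_cherry ::
  "'v set \<Rightarrow> ('v \<times> 'v) set \<Rightarrow> ('v \<Rightarrow> nat) \<Rightarrow> nat \<Rightarrow> nat \<Rightarrow> bool" where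
  "net_ret_cherry V A lab i j \<longleftrightarrow> i \<noteq> j \<and>
     (\<exists>li lj pi pj. li \<in> leaves V A \<and> lj \<in> leaves V A \<and> lab li = i \<and> lab lj = j \<and>
        (pi, li) \<in> A \<and> (pj, lj) \<in> A \<and> pi \<in> V \<and> pj \<in> V \<and>
        is_ret A pi \<and> is_tree_node A pj \<and> (pj, pi) \<in> A)"

definition ms_cherry :: "(nat \<Rightarrow> nat) multiset \<Rightarrow> nat \<Rightarrow> nat \<Rightarrow> bool" where
  "ms_cherry M i j \<longleftrightarrow> count M (delta {i, j}) = 1 \<and>
     (\<forall>m \<in># M. m \<noteq> delta {i} \<and> m \<noteq> delta {j} \<longrightarrow> m i = m j)"

definition ms_ret_cherry :: "(nat \<Rightarrow> nat) multiset \<Rightarrow> nat \<Rightarrow> nat \<Rightarrow> bool" where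
  "ms_ret_cherry M i j \<longleftrightarrow> count M (delta {0, i, j}) = 1 \<and>
     (\<forall>m \<in># M. m \<noteq> delta {i} \<and> m \<noteq> delta {j} \<longrightarrow> m 0 \<ge> m i \<and> m i \<ge> m j)"

end

theory Submission
  imports Defs
begin



lemma paths_Cons_iff:
  "(x#p) \<in> paths A u v \<longleftrightarrow> x = u \<and> (p = [] \<and> u = v \<or> p \<noteq> [] \<and> (u, hd p) \<in> A \<and> p \<in> paths A (hd p) v)"
proof (cases p)
  case Nil then show ?thesis by (auto simp: paths_def)
next
  case (Cons y ys)
  have "(\<forall>k. Suc k < length (x#y#ys) \<longrightarrow> ((x#y#ys) ! k, (x#y#ys) ! Suc k) \<in> A) \<longleftrightarrow>
        (x,y) \<in> A \<and> (\<forall>k. Suc k < length (y#ys) \<longrightarrow> ((y#ys) ! k, (y#ys) ! Suc k) \<in> A)"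
    (is "?L \<longleftrightarrow> ?R")
  proof
    assume L: ?L
    show ?R
    proof
      show "(x,y) \<in> A" using L[rule_format, of 0] by simp
      show "\<forall>k. Suc k < length (y#ys) \<longrightarrow> ((y#ys) ! k, (y#ys) ! Suc k) \<in> A"
        using L by (metis Suc_less_eq length_Cons nth_Cons_Suc)
    qed
  next
    assume R: ?R
    show ?L
    proof (intro allI impI)
      fix k assume "Suc k < length (x#y#ys)"
      then show "((x#y#ys) ! k, (x#y#ys) ! Suc k) \<in> A"
        using R by (cases k) auto
    qed
  qed
  then show ?thesis using Cons by (auto simp: paths_def)
qed

lemma paths_rtrancl: "p \<in> paths A u v \<Longrightarrow> (u,v) \<in> A\<^sup>*"
proof (induction p arbitrary: u)
  case Nil then show ?case by (simp add: paths_def)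
next
  case (Cons x p)
  then show ?case
    by (auto simp: paths_Cons_iff intro: converse_rtrancl_into_rtrancl)
qed

lemma paths_self:
  assumes "acyclic A" shows "paths A v v = {[v]}"
proof
  show "{[v]} \<subseteq> paths A v v" by (simp add: paths_def)
  show "paths A v v \<subseteq> {[v]}"
  proof
    fix p assume p: "p \<in> paths A v v"
    then obtain x q where pq: "p = x#q" by (cases p) (auto simp: paths_def)
    show "p \<in> {[v]}"
    proof (cases q)
      case Nil then show ?thesis using p pq by (simp add: paths_Cons_iff)
    next
      case (Cons y ys)
      with p pq have "(v,y) \<in> A" "q \<in> paths A y v" by (auto simp: paths_Cons_iff)
      then have "(v,v) \<in> A\<^sup>+" using paths_rtrancl by (meson rtrancl_into_trancl2)
      with assms show ?thesis by (simp add: acyclic_def)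
    qed
  qed
qed

lemma paths_step:
  assumes "u \<noteq> v"
  shows "paths A u v = (\<Union>c\<in>{c. (u,c) \<in> A}. (Cons u) ` paths A c v)"
proof
  show "paths A u v \<subseteq> (\<Union>c\<in>{c. (u,c) \<in> A}. (Cons u) ` paths A c v)"
  proof
    fix p assume p: "p \<in> paths A u v"
    then obtain x q where pq: "p = x#q" by (cases p) (auto simp: paths_def)
    with p assms have "x = u" "q \<noteq> []" "(u, hd q) \<in> A" "q \<in> paths A (hd q) v"
      by (auto simp: paths_Cons_iff)
    then show "p \<in> (\<Union>c\<in>{c. (u,c) \<in> A}. (Cons u) ` paths A c v)" using pq by blast
  qed
  show "(\<Union>c\<in>{c. (u,c) \<in> A}. (Cons u) ` paths A c v) \<subseteq> paths A u v"
  proof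
    fix p assume "p \<in> (\<Union>c\<in>{c. (u,c) \<in> A}. (Cons u) ` paths A c v)"
    then obtain c q where "(u,c) \<in> A" "q \<in> paths A c v" "p = u#q" by blast
    moreover then have "q \<noteq> []" "hd q = c" by (auto simp: paths_def)
    ultimately show "p \<in> paths A u v" by (simp add: paths_Cons_iff)
  qed
qed

lemma finite_succ: "finite A \<Longrightarrow> finite {c. (u,c) \<in> A}"
proof -
  assume "finite A"
  moreover have "{c. (u,c) \<in> A} \<subseteq> snd ` A" by force
  ultimately show ?thesis using finite_subset by blast
qed

lemma finite_pred: "finite A \<Longrightarrow> finite {c. (c,u) \<in> A}"
proof -
  assume "finite A"
  moreover have "{c. (c,u) \<in> A} \<subseteq> fst ` A" by force
  ultimately show ?thesis using finite_subset by blast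
qed

lemma finite_paths:
  assumes "finite A" "acyclic A" shows "finite (paths A u v)"
proof -
  have wf: "wf (A\<inverse>)" using assms finite_acyclic_wf_converse by blast
  have "\<forall>v. finite (paths A u v)"
  proof (induction u rule: wf_induct[OF wf])
    case (1 u)
    show ?case
    proof
      fix v
      show "finite (paths A u v)"
      proof (cases "u = v")
        case True then show ?thesis using paths_self[OF assms(2)] by simp
      next
        case False
        have "finite (\<Union>c\<in>{c. (u,c) \<in> A}. (Cons u) ` paths A c v)"
          using 1 finite_succ[OF assms(1)] by auto
        then show ?thesis using paths_step[OF False] by simp
      qed
    qed
  qed
  then show ?thesis by blast
qed

lemma npaths_self: "acyclic A \<Longrightarrow> npaths A v v = 1"
  by (simp add: npaths_def paths_self)

lemma npaths_step:
  assumes "finite A" "acyclic A" "u \<noteq> v"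
  shows "npaths A u v = (\<Sum>c\<in>{c. (u,c) \<in> A}. npaths A c v)"
proof -
  have "npaths A u v = card (\<Union>c\<in>{c. (u,c) \<in> A}. (Cons u) ` paths A c v)"
    using paths_step[OF assms(3)] by (simp add: npaths_def)
  also have "\<dots> = (\<Sum>c\<in>{c. (u,c) \<in> A}. card ((Cons u) ` paths A c v))"
  proof (rule card_UN_disjoint)
    show "finite {c. (u, c) \<in> A}" using finite_succ[OF assms(1)] .
    show "\<forall>c\<in>{c. (u, c) \<in> A}. finite (Cons u ` paths A c v)"
      using finite_paths[OF assms(1,2)] by blast
    show "\<forall>c\<in>{c. (u, c) \<in> A}. \<forall>d\<in>{c. (u, c) \<in> A}. c \<noteq> d \<longrightarrow> Cons u ` paths A c v \<inter> Cons u ` paths A d v = {}"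
      by (auto simp: paths_def)
  qed
  also have "\<dots> = (\<Sum>c\<in>{c. (u,c) \<in> A}. npaths A c v)"
    by (simp add: npaths_def card_image)
  finally show ?thesis .
qed

lemma rev_paths: "p \<in> paths A u v \<Longrightarrow> rev p \<in> paths (A\<inverse>) v u"
proof -
  assume p: "p \<in> paths A u v"
  have "\<forall>k. Suc k < length (rev p) \<longrightarrow> (rev p ! k, rev p ! Suc k) \<in> A\<inverse>"
  proof (intro allI impI)
    fix k assume k: "Suc k < length (rev p)"
    define k' where "k' = length p - Suc (Suc k)"
    have e1: "Suc k' = length p - Suc k" using k unfolding k'_def by simp
    have "(p ! k', p ! Suc k') \<in> A" using p k unfolding paths_def k'_def by auto
    then show "(rev p ! k, rev p ! Suc k) \<in> A\<inverse>"
      using k by (simp add: rev_nth k'_def e1[unfolded k'_def])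
  qed
  with p show ?thesis by (auto simp: paths_def hd_rev last_rev)
qed

lemma npaths_conv: "npaths A u v = npaths (A\<inverse>) v u"
proof -
  have "paths (A\<inverse>) v u = rev ` paths A u v"
  proof
    show "rev ` paths A u v \<subseteq> paths (A\<inverse>) v u" by (rule image_subsetI) (rule rev_paths)
    show "paths (A\<inverse>) v u \<subseteq> rev ` paths A u v"
    proof
      fix p assume "p \<in> paths (A\<inverse>) v u"
      then have "rev p \<in> paths A u v" using rev_paths[of p "A\<inverse>" v u] by simp
      then show "p \<in> rev ` paths A u v" by (metis image_eqI rev_rev_ident)
    qed
  qed
  then show ?thesis by (simp add: npaths_def card_image)
qed

lemma npaths_step_pred:
  assumes "finite A" "acyclic A" "u \<noteq> v"
  shows "npaths A u v = (\<Sum>c\<in>{c. (c,v) \<in> A}. npaths A u c)"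
proof -
  have "npaths A u v = npaths (A\<inverse>) v u" by (rule npaths_conv)
  also have "\<dots> = (\<Sum>c\<in>{c. (v,c) \<in> A\<inverse>}. npaths (A\<inverse>) c u)"
    using assms by (intro npaths_step) auto
  also have "\<dots> = (\<Sum>c\<in>{c. (c,v) \<in> A}. npaths A u c)"
    by (simp add: npaths_conv[symmetric])
  finally show ?thesis .
qed

lemma npaths_pos_iff:
  assumes "finite A" "acyclic A"
  shows "npaths A u v \<ge> 1 \<longleftrightarrow> (u,v) \<in> A\<^sup>*"
proof
  assume "npaths A u v \<ge> 1"
  then have "paths A u v \<noteq> {}" by (auto simp: npaths_def)
  then show "(u,v) \<in> A\<^sup>*" by (meson ex_in_conv paths_rtrancl)
next
  assume "(u,v) \<in> A\<^sup>*"
  then show "npaths A u v \<ge> 1"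
  proof (induction rule: converse_rtrancl_induct)
    case base then show ?case using npaths_self[OF assms(2)] by simp
  next
    case (step y z)
    show ?case
    proof (cases "y = v")
      case True then show ?thesis using npaths_self[OF assms(2)] by simp
    next
      case False
      have "npaths A z v \<le> (\<Sum>c\<in>{c. (y,c) \<in> A}. npaths A c v)"
        using step(1) finite_succ[OF assms(1)] by (intro member_le_sum) auto
      then show ?thesis using npaths_step[OF assms False] step by simp
    qed
  qed
qed




lemma card2_ex: "card S = 2 \<Longrightarrow> \<exists>a b. a \<noteq> b \<and> S = {a,b}"
  by (metis card_2_iff)

locale pn =
  fixes n :: nat and X :: "nat set" and V :: "'v set" and A :: "('v \<times> 'v) set" and lab :: "'v \<Rightarrow> nat"
  assumes pn: "phylo_network n X V A lab"
begin

abbreviation m where "m u v \<equiv> npaths A u v"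
abbreviation S where "S u \<equiv> (\<Sum>h\<in>VH V A. npaths A u h)"

lemma fV: "finite V" using pn by (simp add: phylo_network_def)
lemma AV: "A \<subseteq> V \<times> V" using pn by (simp add: phylo_network_def)
lemma acyc: "acyclic A" using pn by (simp add: phylo_network_def acyclic_def)
lemma fA: "finite A" using AV fV finite_subset by blast
lemma cls: "v \<in> V \<Longrightarrow> is_root A v \<or> is_leaf A v \<or> is_tree_node A v \<or> is_ret A v"
  using pn by (simp add: phylo_network_def)
lemma XS: "X \<subseteq> {1..n}" using pn by (simp add: phylo_network_def)
lemma bij: "bij_betw lab (leaves V A) X" using pn by (simp add: phylo_network_def)
lemma root_unique: "x \<in> V \<Longrightarrow> y \<in> V \<Longrightarrow> is_root A x \<Longrightarrow> is_root A y \<Longrightarrow> x = y"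
proof -
  assume a: "x \<in> V" "y \<in> V" "is_root A x" "is_root A y"
  have "card {v \<in> V. is_root A v} = 1" using pn by (simp add: phylo_network_def)
  then obtain r where r: "{v \<in> V. is_root A v} = {r}" by (auto simp: card_1_singleton_iff)
  have "x \<in> {r}" "y \<in> {r}" using a by (simp_all add: r[symmetric])
  then show ?thesis by simp
qed

lemma inA: "(x,y) \<in> A \<Longrightarrow> x \<in> V \<and> y \<in> V" using AV by blast

lemma fsucc: "finite {c. (u,c) \<in> A}" using finite_succ[OF fA] .
lemma fpred: "finite {c. (c,u) \<in> A}" using finite_pred[OF fA] .

lemma leaf_succ: "is_leaf A l \<Longrightarrow> {c. (l,c) \<in> A} = {}"
  using fsucc by (simp add: is_leaf_def outdeg_def)
lemma leaf_pred: "is_leaf A l \<Longrightarrow> \<exists>p. {c. (c,l) \<in> A} = {p}"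
  by (simp add: is_leaf_def indeg_def card_1_singleton_iff)
lemma tree_pred: "is_tree_node A l \<Longrightarrow> \<exists>p. {c. (c,l) \<in> A} = {p}"
  by (simp add: is_tree_node_def indeg_def card_1_singleton_iff)
lemma tree_succ: "is_tree_node A t \<Longrightarrow> \<exists>a b. a \<noteq> b \<and> {c. (t,c) \<in> A} = {a,b}"
  by (simp add: is_tree_node_def outdeg_def card2_ex)
lemma ret_succ: "is_ret A h \<Longrightarrow> \<exists>d. {c. (h,c) \<in> A} = {d}"
  by (simp add: is_ret_def outdeg_def card_1_singleton_iff)
lemma ret_pred: "is_ret A h \<Longrightarrow> \<exists>x y. x \<noteq> y \<and> {c. (c,h) \<in> A} = {x,y}"
  by (simp add: is_ret_def indeg_def card2_ex)
lemma not_root: "(x,v) \<in> A \<Longrightarrow> \<not> is_root A v"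
proof
  assume "(x,v) \<in> A" "is_root A v"
  then have "card {u. (u,v) \<in> A} = 0" "{u. (u,v) \<in> A} \<noteq> {}" by (auto simp: is_root_def indeg_def)
  then show False using fpred by simp
qed
lemma kinds:
  "is_leaf A v \<Longrightarrow> \<not> is_tree_node A v \<and> \<not> is_ret A v \<and> \<not> is_root A v"
  "is_tree_node A v \<Longrightarrow> \<not> is_ret A v \<and> \<not> is_root A v"
  "is_ret A v \<Longrightarrow> \<not> is_root A v"
  by (auto simp: is_leaf_def is_tree_node_def is_ret_def is_root_def)

lemma leaves_iff: "l \<in> leaves V A \<longleftrightarrow> l \<in> V \<and> is_leaf A l" by (simp add: leaves_def)
lemma VT_iff: "v \<in> VT V A \<longleftrightarrow> v \<in> V \<and> (is_leaf A v \<or> is_tree_node A v)" by (simp add: VT_def)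
lemma VH_iff: "v \<in> VH V A \<longleftrightarrow> v \<in> V \<and> is_ret A v" by (simp add: VH_def)
lemma fVH: "finite (VH V A)" using fV by (simp add: VH_def)
lemma fVT: "finite (VT V A)" using fV by (simp add: VT_def)

lemma m_self: "m v v = 1" using npaths_self[OF acyc] .
lemma m_step: "u \<noteq> v \<Longrightarrow> m u v = (\<Sum>c\<in>{c. (u,c) \<in> A}. m c v)"
  using npaths_step[OF fA acyc] .
lemma m_pstep: "u \<noteq> v \<Longrightarrow> m u v = (\<Sum>c\<in>{c. (c,v) \<in> A}. m u c)"
  using npaths_step_pred[OF fA acyc] .
lemma reach: "m u v \<ge> 1 \<longleftrightarrow> (u,v) \<in> A\<^sup>*" using npaths_pos_iff[OF fA acyc] .
lemma m_edge: "(u,v) \<in> A \<Longrightarrow> m u v \<ge> 1" using reach by blast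

lemma m_leaf: "is_leaf A l \<Longrightarrow> v \<noteq> l \<Longrightarrow> m l v = 0"
  using m_step[of l v] leaf_succ by simp
lemma leaf_reach: "is_leaf A l \<Longrightarrow> (l,x) \<in> A\<^sup>* \<Longrightarrow> x = l"
proof (rule ccontr)
  assume "is_leaf A l" "(l,x) \<in> A\<^sup>*" "x \<noteq> l"
  then have "m l x = 0" by (simp add: m_leaf)
  moreover have "m l x \<ge> 1" using reach \<open>(l,x) \<in> A\<^sup>*\<close> by blast
  ultimately show False by simp
qed
lemma m_child_le: "(u,c) \<in> A \<Longrightarrow> u \<noteq> v \<Longrightarrow> m c v \<le> m u v"
  using m_step[of u v] fsucc by (auto intro: member_le_sum)
lemma m_parent_le: "(c,v) \<in> A \<Longrightarrow> u \<noteq> v \<Longrightarrow> m u c \<le> m u v"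
  using m_pstep[of u v] fpred by (auto intro: member_le_sum)
lemma m_two: "{c. (u,c) \<in> A} = {a,b} \<Longrightarrow> a \<noteq> b \<Longrightarrow> u \<noteq> v \<Longrightarrow> m u v = m a v + m b v"
  using m_step[of u v] by simp
lemma m_one: "{c. (u,c) \<in> A} = {d} \<Longrightarrow> u \<noteq> v \<Longrightarrow> m u v = m d v"
  using m_step[of u v] by simp
lemma mp_one: "{c. (c,v) \<in> A} = {p} \<Longrightarrow> u \<noteq> v \<Longrightarrow> m u v = m u p"
  using m_pstep[of u v] by simp
lemma mp_two: "{c. (c,v) \<in> A} = {p,q} \<Longrightarrow> p \<noteq> q \<Longrightarrow> u \<noteq> v \<Longrightarrow> m u v = m u p + m u q"
  using m_pstep[of u v] by simp
lemma irr: "(x,x) \<notin> A" using acyc by (auto simp: acyclic_def)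

lemma reach_leaf: "v \<in> V \<Longrightarrow> \<exists>l\<in>leaves V A. m v l \<ge> 1"
proof (induction v rule: wf_induct[OF finite_acyclic_wf_converse[OF fA acyc]])
  case (1 v)
  show ?case
  proof (cases "{c. (v,c) \<in> A} = {}")
    case True
    then have "outdeg A v = 0" by (simp add: outdeg_def)
    then have "is_leaf A v" using cls[OF "1.prems"]
      by (auto simp: is_root_def is_tree_node_def is_ret_def)
    then have "v \<in> leaves V A" using "1.prems" by (simp add: leaves_iff)
    then show ?thesis using m_self[of v] by force
  next
    case False
    then obtain c where c: "(v,c) \<in> A" by blast
    then obtain l where l: "l \<in> leaves V A" "m c l \<ge> 1" using 1 inA by blast
    then have "(v,l) \<in> A\<^sup>*" using c reach by (meson converse_rtrancl_into_rtrancl)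
    then show ?thesis using l reach by blast
  qed
qed

lemma anc_VT: "v \<in> V \<Longrightarrow> \<not> is_root A v \<Longrightarrow> \<exists>w\<in>VT V A. (w,v) \<in> A\<^sup>*"
proof (induction v rule: wf_induct[OF finite_acyclic_wf[OF fA acyc]])
  case (1 v)
  show ?case
  proof (cases "v \<in> VT V A")
    case True then show ?thesis by blast
  next
    case False
    then have "is_ret A v" using cls "1.prems" by (auto simp: VT_iff)
    then obtain x y where xy: "x \<noteq> y" "{c. (c,v) \<in> A} = {x,y}" using ret_pred by blast
    then have e: "(x,v) \<in> A" "(y,v) \<in> A" by auto
    then have "x \<in> V" "y \<in> V" using inA by auto
    then have "\<not> is_root A x \<or> \<not> is_root A y" using root_unique xy(1) by blast
    then obtain p where p: "(p,v) \<in> A" "p \<in> V" "\<not> is_root A p" using e \<open>x \<in> V\<close> \<open>y \<in> V\<close> by blast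
    then obtain w where "w \<in> VT V A" "(w,p) \<in> A\<^sup>*" using 1 by blast
    then show ?thesis using p(1) by (meson rtrancl.rtrancl_into_rtrancl)
  qed
qed

lemma S_leaf: "is_leaf A l \<Longrightarrow> S l = 0"
proof -
  assume l: "is_leaf A l"
  have "\<forall>h\<in>VH V A. m l h = 0"
  proof
    fix h assume "h \<in> VH V A"
    then have "h \<noteq> l" using l kinds(1) by (auto simp: VH_iff)
    then show "m l h = 0" using m_leaf[OF l] by blast
  qed
  then show ?thesis by simp
qed
lemma S_ret: "h \<in> VH V A \<Longrightarrow> S h \<ge> 1"
proof -
  assume h: "h \<in> VH V A"
  have "m h h \<le> S h" using fVH h by (intro member_le_sum) auto
  then show ?thesis using m_self by simp
qed
lemma S_child_le: "(u,c) \<in> A \<Longrightarrow> u \<notin> VH V A \<Longrightarrow> S c \<le> S u"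
  by (intro sum_mono) (auto intro: m_child_le)

lemma T2:
  assumes t: "is_tree_node A c" and l: "l \<in> leaves V A"
    and o: "\<forall>l'\<in>leaves V A. l' \<noteq> l \<longrightarrow> m c l' = 0"
  shows "m c l \<ge> 2"
proof -
  obtain d1 d2 where d: "d1 \<noteq> d2" "{x. (c,x) \<in> A} = {d1,d2}" using tree_succ[OF t] by blast
  have cl: "c \<noteq> l" using t l kinds by (auto simp: leaves_iff)
  have key: "m d l \<ge> 1" if cd: "(c,d) \<in> A" for d
  proof -
    obtain l1 where l1: "l1 \<in> leaves V A" "m d l1 \<ge> 1" using reach_leaf inA cd by blast
    have "c \<noteq> l1" using t l1 kinds by (auto simp: leaves_iff)
    then have "m d l1 \<le> m c l1" using m_child_le cd by blast
    then have "l1 = l" using o l1 by fastforce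
    then show ?thesis using l1 by simp
  qed
  have "m c l = m d1 l + m d2 l" using m_two[OF d(2) d(1) cl] .
  moreover have "(c,d1) \<in> A" "(c,d2) \<in> A" using d by auto
  ultimately show ?thesis using key[of d1] key[of d2] by linarith
qed

lemma G:
  assumes c: "c \<in> V" "(x,c) \<in> A" and l: "l \<in> leaves V A" and one: "m c l = 1"
    and o: "\<forall>l'\<in>leaves V A. l' \<noteq> l \<longrightarrow> m c l' = 0" and s: "S c \<le> 1"
  shows "c = l \<or> (c \<in> VH V A \<and> (c,l) \<in> A)"
proof -
  have nr: "\<not> is_root A c" using not_root c by blast
  consider "is_leaf A c" | "is_tree_node A c" | "is_ret A c" using cls[OF c(1)] nr by blast
  then show ?thesis
  proof cases
    case 1
    then show ?thesis using one reach leaf_reach by (metis order_refl)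
  next
    case 2 then show ?thesis using T2 l o one by fastforce
  next
    case 3
    note cret = 3
    then obtain d where d: "{y. (c,y) \<in> A} = {d}" using ret_succ by blast
    then have cd: "(c,d) \<in> A" by auto
    then have dV: "d \<in> V" using inA by blast
    have cl: "c \<noteq> l" using 3 l kinds by (auto simp: leaves_iff)
    have mdl: "m d l = 1" using m_one[OF d cl] one by simp
    have ndr: "\<not> is_root A d" using not_root cd by blast
    consider "is_leaf A d" | "is_tree_node A d" | "is_ret A d" using cls[OF dV] ndr by blast
    then show ?thesis
    proof cases
      case 1
      then have "d = l" using mdl reach leaf_reach by (metis order_refl)
      then show ?thesis using cd 3 c by (simp add: VH_iff)
    next
      case 2
      have "\<forall>l'\<in>leaves V A. l' \<noteq> l \<longrightarrow> m d l' = 0"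
      proof (intro ballI impI)
        fix l' assume "l' \<in> leaves V A" "l' \<noteq> l"
        moreover then have "c \<noteq> l'" using 3 kinds by (auto simp: leaves_iff)
        ultimately show "m d l' = 0" using m_one[OF d, of l'] o by simp
      qed
      then have "m d l \<ge> 2" using T2[OF 2 l] by blast
      then show ?thesis using mdl by simp
    next
      case 3
      have "c \<noteq> d" using cd irr by blast
      have sub: "{c,d} \<subseteq> VH V A" using cret 3 c dV by (auto simp: VH_iff)
      have "(\<Sum>h\<in>{c,d}. m c h) \<le> S c" using sum_mono2[OF fVH sub] by blast
      moreover have "(\<Sum>h\<in>{c,d}. m c h) = m c c + m c d" using \<open>c \<noteq> d\<close> by simp
      moreover have "m c d \<ge> 1" using m_edge cd by blast
      ultimately show ?thesis using s m_self by simp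
    qed
  qed
qed

lemma AN0:
  assumes u: "u \<in> V" "is_tree_node A u" and ab: "(u,a) \<in> A" "(u,b) \<in> A"
    and li: "li \<in> leaves V A" and lj: "lj \<in> leaves V A"
    and o: "\<forall>l\<in>leaves V A. l \<noteq> li \<and> l \<noteq> lj \<longrightarrow> m u l = 0"
    and s: "S u \<le> 1"
    and v: "m a li = 1" "m a lj = 0" "m b lj = 1" "m b li = 0"
  shows "(a = li \<or> (a \<in> VH V A \<and> (a,li) \<in> A)) \<and> (b = lj \<or> (b \<in> VH V A \<and> (b,lj) \<in> A))"
proof -
  have uVH: "u \<notin> VH V A" using u kinds by (auto simp: VH_iff)
  have le: "m c l = 0" if "(u,c) \<in> A" "l \<in> leaves V A" "l \<noteq> li" "l \<noteq> lj" for c l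
  proof -
    have "u \<noteq> l" using u that kinds by (auto simp: leaves_iff)
    then show ?thesis using m_child_le[OF that(1)] o that by fastforce
  qed
  have "a = li \<or> (a \<in> VH V A \<and> (a,li) \<in> A)"
    using G[of a u li] ab inA li v le S_child_le[OF ab(1) uVH] s by fastforce
  moreover have "b = lj \<or> (b \<in> VH V A \<and> (b,lj) \<in> A)"
    using G[of b u lj] ab inA lj v le S_child_le[OF ab(2) uVH] s by fastforce
  ultimately show ?thesis by blast
qed

lemma AN:
  assumes u: "u \<in> VT V A"
    and li: "li \<in> leaves V A" and lj: "lj \<in> leaves V A" and d: "li \<noteq> lj"
    and mi: "m u li = 1" and mj: "m u lj = 1"
    and o: "\<forall>l\<in>leaves V A. l \<noteq> li \<and> l \<noteq> lj \<longrightarrow> m u l = 0"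
    and s: "S u \<le> 1"
  shows "is_tree_node A u \<and> (\<exists>a b. (u,a) \<in> A \<and> (u,b) \<in> A \<and> a \<noteq> b \<and>
     (a = li \<or> (a \<in> VH V A \<and> (a,li) \<in> A)) \<and> (b = lj \<or> (b \<in> VH V A \<and> (b,lj) \<in> A)) \<and>
     S u = S a + S b)"
proof -
  have uV: "u \<in> V" using u by (simp add: VT_iff)
  have t: "is_tree_node A u"
  proof (rule ccontr)
    assume "\<not> is_tree_node A u"
    then have "is_leaf A u" using u by (simp add: VT_iff)
    then have "li = u" "lj = u" using mi mj reach leaf_reach by (metis order_refl)+
    then show False using d by simp
  qed
  obtain a b where ab: "a \<noteq> b" "{c. (u,c) \<in> A} = {a,b}" using tree_succ[OF t] by blast
  have abA: "(u,a) \<in> A" "(u,b) \<in> A" using ab by auto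
  have uVH: "u \<notin> VH V A" using t kinds by (auto simp: VH_iff)
  have S2: "S u = S a + S b"
  proof -
    have "S u = (\<Sum>h\<in>VH V A. m a h + m b h)"
      using uVH by (intro sum.cong) (auto intro: m_two[OF ab(2) ab(1)])
    then show ?thesis by (simp add: sum.distrib)
  qed
  have ul: "u \<noteq> l" if "l \<in> leaves V A" for l using t that kinds by (auto simp: leaves_iff)
  have lr: "l = li \<or> l = lj" if "(u,c) \<in> A" "l \<in> leaves V A" "m c l \<ge> 1" for c l
    using m_child_le[OF that(1) ul[OF that(2)]] o that by fastforce
  obtain la where la: "la \<in> leaves V A" "m a la \<ge> 1" using reach_leaf inA abA by blast
  obtain lb where lb: "lb \<in> leaves V A" "m b lb \<ge> 1" using reach_leaf inA abA by blast
  have si: "m a li + m b li = 1" using m_two[OF ab(2) ab(1) ul[OF li]] mi by simp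
  have sj: "m a lj + m b lj = 1" using m_two[OF ab(2) ab(1) ul[OF lj]] mj by simp
  have "(m a li = 1 \<and> m a lj = 0 \<and> m b lj = 1 \<and> m b li = 0) \<or>
        (m b li = 1 \<and> m b lj = 0 \<and> m a lj = 1 \<and> m a li = 0)"
    using lr[OF abA(1) la] lr[OF abA(2) lb] la lb si sj by auto
  then show ?thesis
  proof
    assume v: "m a li = 1 \<and> m a lj = 0 \<and> m b lj = 1 \<and> m b li = 0"
    then show ?thesis using AN0[OF uV t abA li lj o s] v t abA ab S2 by blast
  next
    assume v: "m b li = 1 \<and> m b lj = 0 \<and> m a lj = 1 \<and> m a li = 0"
    then have "(b = li \<or> (b \<in> VH V A \<and> (b,li) \<in> A)) \<and> (a = lj \<or> (a \<in> VH V A \<and> (a,lj) \<in> A))"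
      using AN0[OF uV t abA(2) abA(1) li lj o s] by blast
    then show ?thesis using t abA ab S2 by (metis add.commute)
  qed
qed

end



lemma count_img_mset_set:
  assumes "finite S" shows "count (image_mset f (mset_set S)) y = card {x\<in>S. f x = y}"
  using assms
proof (induction S rule: finite_induct)
  case empty then show ?case by simp
next
  case (insert a F)
  have "{x \<in> insert a F. f x = y} = (if f a = y then insert a {x\<in>F. f x = y} else {x\<in>F. f x = y})"
    by auto
  then show ?case using insert by auto
qed

context pn begin

abbreviation mu where "mu u \<equiv> muvec n V A lab u"
definition lf where "lf k = inv_into (leaves V A) lab k"

lemma lf_in: "k \<in> X \<Longrightarrow> lf k \<in> leaves V A \<and> lab (lf k) = k"
  using bij unfolding lf_def
  by (metis bij_betw_def bij_betw_inv_into_right inv_into_into)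
lemma lf_lab: "l \<in> leaves V A \<Longrightarrow> lf (lab l) = l"
  using bij unfolding lf_def by (simp add: bij_betw_inv_into_left)
lemma lab_X: "l \<in> leaves V A \<Longrightarrow> lab l \<in> X"
  using bij by (simp add: bij_betw_apply)
lemma lab_range: "l \<in> leaves V A \<Longrightarrow> 1 \<le> lab l \<and> lab l \<le> n"
  using lab_X[of l] XS by (meson atLeastAtMost_iff subsetD)

lemma leafset: "{l \<in> leaves V A. lab l = k} = (if k \<in> X then {lf k} else {})"
  using lf_in lf_lab lab_X by force

lemma mu_k: "1 \<le> k \<Longrightarrow> k \<le> n \<Longrightarrow> mu u k = (if k \<in> X then m u (lf k) else 0)"
  by (simp add: muvec_def leafset)
lemma mu_0: "mu u 0 = S u" by (simp add: muvec_def)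
lemma mu_big: "k > n \<Longrightarrow> mu u k = 0" by (simp add: muvec_def)

lemma mu_leaf: "l \<in> leaves V A \<Longrightarrow> mu l = delta {lab l}"
proof
  fix k assume l: "l \<in> leaves V A"
  have lf: "is_leaf A l" using l by (simp add: leaves_iff)
  show "mu l k = delta {lab l} k"
  proof (cases "k = 0")
    case True then show ?thesis using S_leaf[OF lf] lab_range[OF l] by (simp add: mu_0 delta_def)
  next
    case False
    show ?thesis
    proof (cases "k \<le> n")
      case True
      show ?thesis
      proof (cases "k \<in> X")
        case True
        have "lf k = l \<longleftrightarrow> k = lab l" using lf_in[OF True] lf_lab[OF l] by auto
        then show ?thesis using True \<open>k \<noteq> 0\<close> \<open>k \<le> n\<close> m_self m_leaf[OF lf, of "lf k"]
          by (auto simp: mu_k delta_def)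
      next
        case False
        then show ?thesis using \<open>k \<noteq> 0\<close> \<open>k \<le> n\<close> lab_X[OF l] by (auto simp: mu_k delta_def)
      qed
    next
      case False then show ?thesis using lab_range[OF l] by (auto simp: mu_big delta_def)
    qed
  qed
qed

lemma EXT:
  assumes i: "i \<in> {1..n}" and j: "j \<in> {1..n}" and ij: "i \<noteq> j"
    and mu: "mu u = delta D" and D: "i \<in> D" "j \<in> D" "\<forall>k\<in>D. k = 0 \<or> k = i \<or> k = j"
  shows "i \<in> X \<and> j \<in> X \<and> m u (lf i) = 1 \<and> m u (lf j) = 1 \<and>
    (\<forall>l\<in>leaves V A. l \<noteq> lf i \<and> l \<noteq> lf j \<longrightarrow> m u l = 0) \<and> S u = delta D 0"
proof -
  have mi: "mu u i = 1" "mu u j = 1" using mu D by (auto simp: delta_def)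
  have iX: "i \<in> X" using mi(1) i mu_k[of i u] by (auto split: if_splits)
  have jX: "j \<in> X" using mi(2) j mu_k[of j u] by (auto split: if_splits)
  have o: "\<forall>l\<in>leaves V A. l \<noteq> lf i \<and> l \<noteq> lf j \<longrightarrow> m u l = 0"
  proof (intro ballI impI)
    fix l assume l: "l \<in> leaves V A" "l \<noteq> lf i \<and> l \<noteq> lf j"
    then have "lab l \<noteq> i" "lab l \<noteq> j" using lf_lab by auto
    moreover have "lab l \<noteq> 0" using lab_range[OF l(1)] by simp
    ultimately have "mu u (lab l) = 0" using mu D by (auto simp: delta_def)
    then show "m u l = 0" using mu_k[of "lab l" u] lab_range[OF l(1)] lab_X[OF l(1)] lf_lab[OF l(1)] by simp
  qed
  have "m u (lf i) = 1" using mi(1) i mu_k[of i u] iX by simp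
  moreover have "m u (lf j) = 1" using mi(2) j mu_k[of j u] jX by simp
  moreover have "S u = delta D 0" using mu_0[of u] mu by simp
  ultimately show ?thesis using iX jX o by blast
qed

lemma R: "v \<in> V \<Longrightarrow> \<exists>r\<in>V. is_root A r \<and> (r,v) \<in> A\<^sup>*"
proof (induction v rule: wf_induct[OF finite_acyclic_wf[OF fA acyc]])
  case (1 v)
  show ?case
  proof (cases "is_root A v")
    case True then show ?thesis using "1.prems" by blast
  next
    case False
    then have "indeg A v \<noteq> 0" using cls[OF "1.prems"]
      by (auto simp: is_leaf_def is_tree_node_def is_ret_def)
    then have "{u. (u,v) \<in> A} \<noteq> {}" unfolding indeg_def by (metis card.empty)
    then obtain p where p: "(p,v) \<in> A" by blast
    then obtain r where "r \<in> V" "is_root A r" "(r,p) \<in> A\<^sup>*" using 1 inA by blast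
    then show ?thesis using p by (meson rtrancl.rtrancl_into_rtrancl)
  qed
qed

lemma mem_M: "x \<in># mu_multiset n V A lab \<longleftrightarrow> (\<exists>u\<in>VT V A. x = mu u)"
  using fVT by (auto simp: mu_multiset_def)
lemma count_M: "count (mu_multiset n V A lab) y = card {u\<in>VT V A. mu u = y}"
  using fVT by (simp add: mu_multiset_def count_img_mset_set)

end



lemma two_eq: "x \<in> {a,b} \<Longrightarrow> y \<in> {a,b} \<Longrightarrow> x \<noteq> y \<Longrightarrow> {a,b} = {x,y}"
  by auto

context pn begin

lemma pred_is: "{c. (c,l) \<in> A} = {q} \<Longrightarrow> (p,l) \<in> A \<Longrightarrow> {c. (c,l) \<in> A} = {p}"
  by auto
lemma leaf_pred_is: "is_leaf A l \<Longrightarrow> (p,l) \<in> A \<Longrightarrow> {c. (c,l) \<in> A} = {p}"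
  using leaf_pred pred_is by metis

lemma mleaf_eq: "l \<in> leaves V A \<Longrightarrow> k \<in> X \<Longrightarrow> m l (lf k) = (if k = lab l then 1 else 0)"
proof -
  assume l: "l \<in> leaves V A" and k: "k \<in> X"
  have "lf k = l \<longleftrightarrow> k = lab l" using lf_in[OF k] lf_lab[OF l] by auto
  then show ?thesis using m_self m_leaf[of l "lf k"] l by (auto simp: leaves_iff)
qed

lemma mu_eqI:
  assumes "S u = f 0" and "\<And>k. 1 \<le> k \<Longrightarrow> k \<le> n \<Longrightarrow> k \<in> X \<Longrightarrow> m u (lf k) = f k"
    and "\<And>k. 1 \<le> k \<Longrightarrow> k \<le> n \<Longrightarrow> k \<notin> X \<Longrightarrow> f k = 0"
    and "\<And>k. k > n \<Longrightarrow> f k = 0"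
  shows "mu u = f"
proof
  fix k
  show "mu u k = f k"
  proof (cases "k = 0")
    case True then show ?thesis using assms(1) mu_0 by simp
  next
    case False
    then show ?thesis using assms(2-4) mu_k[of k u] mu_big[of k u]
      by (cases "k \<le> n") auto
  qed
qed

lemma partA:
  assumes i: "i \<in> {1..n}" and j: "j \<in> {1..n}" and ij: "i \<noteq> j" and nc: "net_cherry V A lab i j"
  shows "ms_cherry (mu_multiset n V A lab) i j"
proof -
  obtain li lj p where li: "li \<in> leaves V A" and lj: "lj \<in> leaves V A" and lbi: "lab li = i"
    and lbj: "lab lj = j" and pli: "(p,li) \<in> A" and plj: "(p,lj) \<in> A"
    using nc unfolding net_cherry_def by blast
  have d: "li \<noteq> lj" using lbi lbj ij by auto
  have lfl: "is_leaf A li" "is_leaf A lj" using li lj by (auto simp: leaves_iff)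
  have pV: "p \<in> V" using inA pli by blast
  have pt: "is_tree_node A p"
  proof -
    have "{li,lj} \<subseteq> {c. (p,c) \<in> A}" using pli plj by auto
    then have "card {li,lj} \<le> outdeg A p" unfolding outdeg_def using fsucc card_mono by blast
    then have "outdeg A p \<ge> 2" using d by simp
    then show ?thesis using cls[OF pV] by (auto simp: is_root_def is_leaf_def is_ret_def)
  qed
  obtain a b where ab: "a \<noteq> b" "{c. (p,c) \<in> A} = {a,b}" using tree_succ[OF pt] by blast
  have "li \<in> {a,b}" "lj \<in> {a,b}" using ab pli plj by blast+
  then have sp: "{c. (p,c) \<in> A} = {li,lj}" using ab two_eq d by metis
  have pr: "{c. (c,li) \<in> A} = {p}" "{c. (c,lj) \<in> A} = {p}"
    using leaf_pred_is lfl pli plj by auto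
  have iX: "i \<in> X" "j \<in> X" using lab_X li lj lbi lbj by auto
  have lfi: "lf i = li" "lf j = lj" using lf_lab li lj lbi lbj by auto
  have mup: "mu p = delta {i,j}"
  proof (rule mu_eqI)
    have "\<forall>h\<in>VH V A. m p h = 0"
    proof
      fix h assume h: "h \<in> VH V A"
      then have "h \<noteq> p" "h \<noteq> li" "h \<noteq> lj" using pt lfl kinds by (auto simp: VH_iff)
      then show "m p h = 0" using m_two[OF sp d] m_leaf lfl by simp
    qed
    then show "S p = delta {i,j} 0" using i j by (simp add: delta_def)
  next
    fix k assume k: "1 \<le> k" "k \<le> n" "k \<in> X"
    have "lf k \<in> leaves V A" using lf_in k by blast
    then have "p \<noteq> lf k" using pt kinds by (auto simp: leaves_iff)
    then have "m p (lf k) = m li (lf k) + m lj (lf k)" using m_two[OF sp d] by simp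
    then show "m p (lf k) = delta {i,j} k" using mleaf_eq[OF li k(3)] mleaf_eq[OF lj k(3)] lbi lbj ij
      by (auto simp: delta_def)
  next
    fix k assume "k \<notin> X" then show "delta {i,j} k = 0" using iX by (auto simp: delta_def)
  next
    fix k assume "k > n" then show "delta {i,j} k = 0" using i j by (auto simp: delta_def)
  qed
  have pVT: "p \<in> VT V A" using pV pt by (simp add: VT_iff)
  have uniq: "u = p" if u: "u \<in> VT V A" "mu u = delta {i,j}" for u
  proof -
    have E: "m u li = 1" "m u lj = 1" "\<forall>l\<in>leaves V A. l \<noteq> li \<and> l \<noteq> lj \<longrightarrow> m u l = 0" "S u = 0"
      using EXT[OF i j ij u(2)] lfi i j by (auto simp: delta_def)
    obtain a b where ab: "(u,a) \<in> A" "a = li \<or> (a \<in> VH V A \<and> (a,li) \<in> A)" "S u = S a + S b"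
      using AN[OF u(1) li lj d E(1) E(2) E(3)] E(4) by auto
    have "a = li" using ab S_ret E(4) by fastforce
    then show "u = p" using ab(1) pr(1) by auto
  qed
  have cnt: "{u\<in>VT V A. mu u = delta {i,j}} = {p}" using uniq pVT mup by blast
  show ?thesis unfolding ms_cherry_def
  proof (intro conjI ballI impI)
    show "count (mu_multiset n V A lab) (delta {i, j}) = 1" by (simp add: count_M cnt)
  next
    fix x assume x: "x \<in># mu_multiset n V A lab" "x \<noteq> delta {i} \<and> x \<noteq> delta {j}"
    then obtain u where u: "u \<in> VT V A" "x = mu u" using mem_M by blast
    have "u \<noteq> li" "u \<noteq> lj" using x u mu_leaf li lj lbi lbj by auto
    then show "x i = x j" using u mu_k[of i u] mu_k[of j u] i j iX lfi mp_one[OF pr(1)] mp_one[OF pr(2)]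
      by simp
  qed
qed

lemma partB:
  assumes i: "i \<in> {1..n}" and j: "j \<in> {1..n}" and ij: "i \<noteq> j" and nc: "net_ret_cherry V A lab i j"
  shows "ms_ret_cherry (mu_multiset n V A lab) i j"
proof -
  obtain li lj pi pj where li: "li \<in> leaves V A" and lj: "lj \<in> leaves V A" and lbi: "lab li = i"
    and lbj: "lab lj = j" and ppi: "(pi,li) \<in> A" and ppj: "(pj,lj) \<in> A" and piV: "pi \<in> V"
    and pjV: "pj \<in> V" and pir: "is_ret A pi" and pjt: "is_tree_node A pj" and pjpi: "(pj,pi) \<in> A"
    using nc unfolding net_ret_cherry_def by blast
  have d: "li \<noteq> lj" using lbi lbj ij by auto
  have lfl: "is_leaf A li" "is_leaf A lj" using li lj by (auto simp: leaves_iff)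
  have pil: "pi \<noteq> lj" "pi \<noteq> li" using pir lfl kinds by auto
  obtain a b where ab: "a \<noteq> b" "{c. (pj,c) \<in> A} = {a,b}" using tree_succ[OF pjt] by blast
  have "pi \<in> {a,b}" "lj \<in> {a,b}" using ab ppj pjpi by blast+
  then have sp: "{c. (pj,c) \<in> A} = {pi,lj}" using ab two_eq pil by metis
  obtain e where e: "{c. (pi,c) \<in> A} = {e}" using ret_succ[OF pir] by blast
  then have spi: "{c. (pi,c) \<in> A} = {li}" using ppi by auto
  have pr: "{c. (c,li) \<in> A} = {pi}" "{c. (c,lj) \<in> A} = {pj}"
    using leaf_pred_is lfl ppi ppj by auto
  have iX: "i \<in> X" "j \<in> X" using lab_X li lj lbi lbj by auto
  have lfi: "lf i = li" "lf j = lj" using lf_lab li lj lbi lbj by auto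
  have piVH: "pi \<in> VH V A" using piV pir by (simp add: VH_iff)
  have pjpi': "pj \<noteq> pi" using pjt pir kinds by auto
  have mpi: "m pi x = (if x = pi then 1 else m li x)" for x
    using m_self m_one[OF spi] by auto
  have mup: "mu pj = delta {0,i,j}"
  proof (rule mu_eqI)
    have "\<forall>h\<in>VH V A. m pj h = (if h = pi then 1 else 0)"
    proof
      fix h assume h: "h \<in> VH V A"
      then have "h \<noteq> pj" "h \<noteq> li" "h \<noteq> lj" using pjt lfl kinds by (auto simp: VH_iff)
      then show "m pj h = (if h = pi then 1 else 0)" using m_two[OF sp pil(1)] m_leaf lfl mpi by simp
    qed
    then have "S pj = (\<Sum>h\<in>VH V A. if h = pi then 1 else 0)" by (intro sum.cong) auto
    also have "\<dots> = 1" using piVH fVH by simp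
    finally show "S pj = delta {0,i,j} 0" by (simp add: delta_def)
  next
    fix k assume k: "1 \<le> k" "k \<le> n" "k \<in> X"
    have "lf k \<in> leaves V A" using lf_in k by blast
    then have "pj \<noteq> lf k" "pi \<noteq> lf k" using pjt pir kinds by (auto simp: leaves_iff)
    then have "m pj (lf k) = m li (lf k) + m lj (lf k)" using m_two[OF sp pil(1)] mpi by simp
    then show "m pj (lf k) = delta {0,i,j} k" using mleaf_eq[OF li k(3)] mleaf_eq[OF lj k(3)] lbi lbj ij k(1)
      by (auto simp: delta_def)
  next
    fix k assume "1 \<le> k" "k \<notin> X" then show "delta {0,i,j} k = 0" using iX by (auto simp: delta_def)
  next
    fix k assume "k > n" then show "delta {0,i,j} k = 0" using i j by (auto simp: delta_def)
  qed
  have pVT: "pj \<in> VT V A" using pjV pjt by (simp add: VT_iff)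
  have uniq: "u = pj" if u: "u \<in> VT V A" "mu u = delta {0,i,j}" for u
  proof -
    have E: "m u li = 1" "m u lj = 1" "\<forall>l\<in>leaves V A. l \<noteq> li \<and> l \<noteq> lj \<longrightarrow> m u l = 0" "S u = 1"
      using EXT[OF i j ij u(2)] lfi i j by (auto simp: delta_def)
    obtain b where ab: "(u,b) \<in> A" "b = lj \<or> (b \<in> VH V A \<and> (b,lj) \<in> A)"
      using AN[OF u(1) li lj d E(1) E(2) E(3)] E(4) by auto
    have "b = lj"
    proof (rule ccontr)
      assume "b \<noteq> lj"
      then have "b \<in> VH V A" "(b,lj) \<in> A" using ab by auto
      moreover have "b = pj" using pr(2) \<open>(b,lj) \<in> A\<close> by blast
      ultimately show False using pjt kinds by (auto simp: VH_iff)
    qed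
    then show "u = pj" using ab(1) pr(2) by auto
  qed
  have cnt: "{u\<in>VT V A. mu u = delta {0,i,j}} = {pj}" using uniq pVT mup by blast
  show ?thesis unfolding ms_ret_cherry_def
  proof (intro conjI)
    show "count (mu_multiset n V A lab) (delta {0, i, j}) = 1" by (simp add: count_M cnt)
  next
    show "\<forall>x\<in>#mu_multiset n V A lab. x \<noteq> delta {i} \<and> x \<noteq> delta {j} \<longrightarrow> x i \<le> x 0 \<and> x j \<le> x i"
    proof (intro ballI impI)
    fix x assume x: "x \<in># mu_multiset n V A lab" "x \<noteq> delta {i} \<and> x \<noteq> delta {j}"
    then obtain u where u: "u \<in> VT V A" "x = mu u" using mem_M by blast
    have ul: "u \<noteq> li" "u \<noteq> lj" using x u mu_leaf li lj lbi lbj by auto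
    have upi: "u \<noteq> pi" using u pir kinds by (auto simp: VT_iff)
    have xi: "x i = m u pi" using u mu_k[of i u] i iX lfi mp_one[OF pr(1) ul(1)] by simp
    have xj: "x j = m u pj" using u mu_k[of j u] j iX lfi mp_one[OF pr(2) ul(2)] by simp
    have x0: "x 0 = S u" using u mu_0 by simp
    have "m u pi \<le> S u" using piVH fVH by (intro member_le_sum) auto
    moreover have "m u pj \<le> m u pi" using m_parent_le[OF pjpi upi] .
    ultimately show "x i \<le> x 0 \<and> x j \<le> x i" using xi xj x0 by simp
  qed
  qed
qed

lemma partC:
  assumes i: "i \<in> {1..n}" and j: "j \<in> {1..n}" and ij: "i \<noteq> j"
    and mc: "ms_cherry (mu_multiset n V A lab) i j"
  shows "net_cherry V A lab i j"
proof -
  have "count (mu_multiset n V A lab) (delta {i,j}) = 1" using mc unfolding ms_cherry_def by blast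
  then have "delta {i,j} \<in># mu_multiset n V A lab" using count_greater_zero_iff by (metis zero_less_one)
  then obtain u where u: "u \<in> VT V A" "mu u = delta {i,j}" using mem_M by metis
  have E: "i \<in> X" "j \<in> X" "m u (lf i) = 1" "m u (lf j) = 1"
      "\<forall>l\<in>leaves V A. l \<noteq> lf i \<and> l \<noteq> lf j \<longrightarrow> m u l = 0" "S u = 0"
    using EXT[OF i j ij u(2)] i j by (auto simp: delta_def)
  have li: "lf i \<in> leaves V A" "lab (lf i) = i" and lj: "lf j \<in> leaves V A" "lab (lf j) = j"
    using lf_in E(1,2) by auto
  have d: "lf i \<noteq> lf j" using li lj ij by metis
  obtain a b where ab: "(u,a) \<in> A" "(u,b) \<in> A" "a = lf i \<or> (a \<in> VH V A \<and> (a,lf i) \<in> A)"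
    "b = lf j \<or> (b \<in> VH V A \<and> (b,lf j) \<in> A)" "S u = S a + S b"
    using AN[OF u(1) li(1) lj(1) d E(3) E(4) E(5)] E(6) by auto
  have "a = lf i" using ab S_ret E(6) by fastforce
  moreover have "b = lf j" using ab S_ret E(6) by fastforce
  ultimately show ?thesis unfolding net_cherry_def using ij li lj ab by blast
qed

lemma partD:
  assumes i: "i \<in> {1..n}" and j: "j \<in> {1..n}" and ij: "i \<noteq> j"
    and mc: "ms_ret_cherry (mu_multiset n V A lab) i j"
  shows "net_ret_cherry V A lab i j"
proof -
  have "count (mu_multiset n V A lab) (delta {0,i,j}) = 1" using mc unfolding ms_ret_cherry_def by blast
  then have "delta {0,i,j} \<in># mu_multiset n V A lab" using count_greater_zero_iff by (metis zero_less_one)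
  then obtain u where u: "u \<in> VT V A" "mu u = delta {0,i,j}" using mem_M by metis
  have E: "i \<in> X" "j \<in> X" "m u (lf i) = 1" "m u (lf j) = 1"
      "\<forall>l\<in>leaves V A. l \<noteq> lf i \<and> l \<noteq> lf j \<longrightarrow> m u l = 0" "S u = 1"
    using EXT[OF i j ij u(2)] i j by (auto simp: delta_def)
  define li where "li = lf i"
  define lj where "lj = lf j"
  have li: "li \<in> leaves V A" "lab li = i" and lj: "lj \<in> leaves V A" "lab lj = j"
    using lf_in E(1,2) li_def lj_def by auto
  have d: "li \<noteq> lj" using li lj ij by metis
  have lfl: "is_leaf A li" "is_leaf A lj" using li lj by (auto simp: leaves_iff)
  have ut: "is_tree_node A u" and
    "\<exists>a b. (u,a) \<in> A \<and> (u,b) \<in> A \<and> a \<noteq> b \<and> (a = li \<or> (a \<in> VH V A \<and> (a,li) \<in> A)) \<and>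
      (b = lj \<or> (b \<in> VH V A \<and> (b,lj) \<in> A)) \<and> S u = S a + S b"
    using AN[OF u(1) li(1) lj(1) d] E(3-6) li_def lj_def by auto
  then obtain a b where ab: "(u,a) \<in> A" "(u,b) \<in> A" "a = li \<or> (a \<in> VH V A \<and> (a,li) \<in> A)"
    "b = lj \<or> (b \<in> VH V A \<and> (b,lj) \<in> A)" "S u = S a + S b" by blast
  have uV: "u \<in> V" using u by (simp add: VT_iff)
  have Sl: "S li = 0" "S lj = 0" using S_leaf lfl by auto
  consider "a = li" "b = lj" | "a \<in> VH V A" "(a,li) \<in> A" "b = lj" | "a \<in> VH V A" "b \<in> VH V A"
    | "a = li" "b \<in> VH V A" "(b,lj) \<in> A" using ab by blast
  then show ?thesis
  proof cases
    case 1 then show ?thesis using ab(5) E(6) Sl by simp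
  next
    case 2
    then show ?thesis unfolding net_ret_cherry_def using ij li lj ab uV ut
      by (auto simp: VH_iff)
  next
    case 3 then show ?thesis using ab(5) E(6) S_ret[of a] S_ret[of b] by simp
  next
    case 4
    have bVH: "b \<in> VH V A" using 4 by simp
    have br: "is_ret A b" using 4 by (simp add: VH_iff)
    have prli: "{c. (c,li) \<in> A} = {u}" using leaf_pred_is lfl ab(1) 4 by auto
    have prlj: "{c. (c,lj) \<in> A} = {b}" using leaf_pred_is lfl 4 by auto
    obtain x y where xy: "x \<noteq> y" "{c. (c,b) \<in> A} = {x,y}" using ret_pred[OF br] by blast
    obtain q where q: "q \<noteq> u" "{c. (c,b) \<in> A} = {u,q}"
    proof -
      have "u \<in> {x,y}" using xy ab(2) by blast
      then show ?thesis
      proof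
        assume "u = x" then show ?thesis using that[of y] xy by simp
      next
        assume "u \<in> {y}" then show ?thesis using that[of x] xy by (auto simp: insert_commute)
      qed
    qed
    have qb: "(q,b) \<in> A" using q by auto
    have qV: "q \<in> V" using inA qb by blast
    have qnr: "\<not> is_root A q"
    proof
      assume qr: "is_root A q"
      obtain r where r: "r \<in> V" "is_root A r" "(r,u) \<in> A\<^sup>*" using R[OF uV] by blast
      have "r = q" using root_unique r qV qr by blast
      moreover have "r \<noteq> u" using r(2) ut kinds by auto
      ultimately have "(q,u) \<in> A\<^sup>+" using r(3) by (simp add: rtrancl_eq_or_trancl)
      then obtain z where z: "(q,z) \<in> A" "(z,u) \<in> A\<^sup>*" using tranclD by metis
      have "outdeg A q = 1" using qr by (simp add: is_root_def)
      then obtain w where "{c. (q,c) \<in> A} = {w}" by (auto simp: outdeg_def card_1_singleton_iff)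
      then have "z = b" using z(1) qb by (metis (mono_tags) mem_Collect_eq singletonD)
      then have "(b,b) \<in> A\<^sup>+" using z(2) ab(2) by (meson rtrancl_into_trancl1)
      then show False using acyc by (simp add: acyclic_def)
    qed
    obtain w where w: "w \<in> VT V A" "(w,q) \<in> A\<^sup>*" using anc_VT[OF qV qnr] by blast
    have wq: "m w q \<ge> 1" using w reach by blast
    have wb: "(w,b) \<in> A\<^sup>*" using w(2) qb by (meson rtrancl.rtrancl_into_rtrancl)
    have wb1: "m w b \<ge> 1" using wb reach by blast
    have qnl: "q \<noteq> li" "q \<noteq> lj" using qb leaf_succ lfl by auto
    have wli: "w \<noteq> li" using w(2) leaf_reach[OF lfl(1)] qnl by blast
    have wlj: "w \<noteq> lj" using w(2) leaf_reach[OF lfl(2)] qnl by blast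
    have wnb: "w \<noteq> b" using w br kinds by (auto simp: VT_iff)
    have mwi: "mu w i = m w u" using mu_k[of i w] i E(1) li_def[symmetric] mp_one[OF prli wli] by simp
    have mwj: "mu w j = m w b" using mu_k[of j w] j E(2) lj_def[symmetric] mp_one[OF prlj wlj] by simp
    have mwb: "m w b = m w u + m w q" using mp_two[OF q(2) q(1)[symmetric] wnb] .
    have S0: "mu w 0 \<ge> 1"
    proof -
      have "m w b \<le> S w" using bVH fVH by (intro member_le_sum) auto
      then show ?thesis using wb1 mu_0 by simp
    qed
    have "mu w \<noteq> delta {i}" using mwj wb1 ij by (auto simp: delta_def dest: fun_cong[of _ _ j])
    moreover have "mu w \<noteq> delta {j}" using S0 j by (auto simp: delta_def dest: fun_cong[of _ _ 0])
    moreover have "mu w \<in># mu_multiset n V A lab" using w mem_M by blast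
    ultimately have "mu w j \<le> mu w i" using mc unfolding ms_ret_cherry_def by blast
    then show ?thesis using mwi mwj mwb wq by simp
  qed
qed

end

theorem mainTheorem6:
  fixes n :: nat and X :: "nat set" and V :: "'v set" and A :: "('v \<times> 'v) set"
    and lab :: "'v \<Rightarrow> nat" and i j :: nat
  assumes "phylo_network n X V A lab"
    and "i \<in> {1..n}" and "j \<in> {1..n}" and "i \<noteq> j"
  shows "(net_cherry V A lab i j \<or> net_ret_cherry V A lab i j) \<longleftrightarrow>
         (ms_cherry (mu_multiset n V A lab) i j \<or> ms_ret_cherry (mu_multiset n V A lab) i j)"
proof -
  interpret pn n X V A lab using assms(1) by unfold_locales
  show ?thesis using partA partB partC partD assms(2-4) by blast
qed



end
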